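(* Let $X$ be a topological space and $M$ a maximal ideal of $B_1(X)$. The following are equivalent: (1) $M$ is real; (2) $Z_B[M]$ is closed under countable intersections; (3) $Z_B[M]$ has the countable intersection property (every countable subfamily has nonempty intersection).
   Context: For a topological space $X$, $B_1(X)$ denotes the lattice-ordered ring (pointwise operations and order) of all Baire one functions $f:X\to\mathbb{R}$, i.e. pointwise limits of sequences of continuous real-valued functions. For $f$, $Z(f)=\{x: f(x)=0\}$; for an ideal $I$, $Z_B[I]=\{Z(f): f\in I\}$. For a maximal ideal $M$, $M(f)=f+M$; $B_1(X)/M$ is a totally ordered field and $\Phi:\mathbb{R}\to B_1(X)/M$, $\Phi(r)=M(\mathbf r)$ ($\mathbf r$ the constant function $r$), is an order-preserving embedding. $M$ is real if $\Phi(\mathbb{R})=B_1(X)/M$, and hyper-real otherwise. *)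

theory Defs
  imports "HOL-Analysis.Analysis" "HOL-Algebra.QuotRing"
begin

text \<open>Real-valued functions on the topological space X are represented as functions
  on the whole type that vanish outside topspace X (so that each function on X has a
  unique representative and the pointwise operations stay inside this convention).\<close>

definition baire_one :: "'a topology \<Rightarrow> ('a \<Rightarrow> real) set" where
  "baire_one X = {f. (\<forall>x. x \<notin> topspace X \<longrightarrow> f x = 0) \<and>
     (\<exists>g :: nat \<Rightarrow> 'a \<Rightarrow> real. (\<forall>n. continuous_map X euclideanreal (g n)) \<and>
        (\<forall>x\<in>topspace X. (\<lambda>n. g n x) \<longlonglongrightarrow> f x))}"

definition const_fun :: "'a topology \<Rightarrow> real \<Rightarrow> 'a \<Rightarrow> real" where
  "const_fun X r = (\<lambda>x. if x \<in> topspace X then r else 0)"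

definition B1_ring :: "'a topology \<Rightarrow> ('a \<Rightarrow> real) ring" where
  "B1_ring X = \<lparr>carrier = baire_one X,
                monoid.mult = (\<lambda>f g x. f x * g x),
                one = const_fun X 1,
                zero = (\<lambda>x. 0),
                add = (\<lambda>f g x. f x + g x)\<rparr>"

definition zero_set :: "'a topology \<Rightarrow> ('a \<Rightarrow> real) \<Rightarrow> 'a set" where
  "zero_set X f = {x \<in> topspace X. f x = 0}"

definition real_max_ideal :: "'a topology \<Rightarrow> ('a \<Rightarrow> real) set \<Rightarrow> bool" where
  "real_max_ideal X M \<longleftrightarrow>
     carrier (B1_ring X Quot M) \<subseteq> (\<lambda>r. M +>\<^bsub>B1_ring X\<^esub> const_fun X r) ` UNIV"

end

theory Submission
  imports Defs
begin

lemma B1_simps[simp]: "carrier (B1_ring X) = baire_one X" "\<one>\<^bsub>B1_ring X\<^esub> = const_fun X 1"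
  "\<zero>\<^bsub>B1_ring X\<^esub> = (\<lambda>x. 0)" "f \<oplus>\<^bsub>B1_ring X\<^esub> g = (\<lambda>x. f x + g x)"
  "f \<otimes>\<^bsub>B1_ring X\<^esub> g = (\<lambda>x. f x * g x)"
  by (simp_all add: B1_ring_def)

lemma baire_oneE:
  assumes "f \<in> baire_one X"
  obtains g where "\<And>n. continuous_map X euclideanreal (g n)"
    "\<And>x. x \<in> topspace X \<Longrightarrow> (\<lambda>n. g n x) \<longlonglongrightarrow> f x"
    "\<And>x. x \<notin> topspace X \<Longrightarrow> f x = 0"
  using assms unfolding baire_one_def by blast

lemma baire_oneI:
  assumes "\<And>n. continuous_map X euclideanreal (g n)"
    "\<And>x. x \<in> topspace X \<Longrightarrow> (\<lambda>n. g n x) \<longlonglongrightarrow> f x"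
    "\<And>x. x \<notin> topspace X \<Longrightarrow> f x = 0"
  shows "f \<in> baire_one X"
  using assms unfolding baire_one_def by blast

lemma baire_const: "const_fun X r \<in> baire_one X"
  by (rule baire_oneI[where g="\<lambda>n x. r"]) (auto simp: const_fun_def)

lemma baire_add: "f \<in> baire_one X \<Longrightarrow> g \<in> baire_one X \<Longrightarrow> (\<lambda>x. f x + g x) \<in> baire_one X"
proof -
  assume f: "f \<in> baire_one X" and g: "g \<in> baire_one X"
  obtain a where a: "\<And>n. continuous_map X euclideanreal (a n)"
    "\<And>x. x \<in> topspace X \<Longrightarrow> (\<lambda>n. a n x) \<longlonglongrightarrow> f x" "\<And>x. x \<notin> topspace X \<Longrightarrow> f x = 0"
    using baire_oneE[OF f] by blast
  obtain b where b: "\<And>n. continuous_map X euclideanreal (b n)"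
    "\<And>x. x \<in> topspace X \<Longrightarrow> (\<lambda>n. b n x) \<longlonglongrightarrow> g x" "\<And>x. x \<notin> topspace X \<Longrightarrow> g x = 0"
    using baire_oneE[OF g] by blast
  show ?thesis
    by (rule baire_oneI[where g="\<lambda>n x. a n x + b n x"]) (auto simp: a b intro: tendsto_add continuous_map_add)
qed

lemma baire_mult: "f \<in> baire_one X \<Longrightarrow> g \<in> baire_one X \<Longrightarrow> (\<lambda>x. f x * g x) \<in> baire_one X"
proof -
  assume f: "f \<in> baire_one X" and g: "g \<in> baire_one X"
  obtain a where a: "\<And>n. continuous_map X euclideanreal (a n)"
    "\<And>x. x \<in> topspace X \<Longrightarrow> (\<lambda>n. a n x) \<longlonglongrightarrow> f x" "\<And>x. x \<notin> topspace X \<Longrightarrow> f x = 0"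
    using baire_oneE[OF f] by blast
  obtain b where b: "\<And>n. continuous_map X euclideanreal (b n)"
    "\<And>x. x \<in> topspace X \<Longrightarrow> (\<lambda>n. b n x) \<longlonglongrightarrow> g x" "\<And>x. x \<notin> topspace X \<Longrightarrow> g x = 0"
    using baire_oneE[OF g] by blast
  show ?thesis
    by (rule baire_oneI[where g="\<lambda>n x. a n x * b n x"]) (auto simp: a b intro: tendsto_mult continuous_map_real_mult)
qed

lemma baire_comp:
  assumes "f \<in> baire_one X" "continuous_on UNIV \<phi>" "\<phi> 0 = 0"
  shows "(\<lambda>x. \<phi> (f x)) \<in> baire_one X"
proof -
  obtain a where a: "\<And>n. continuous_map X euclideanreal (a n)"
    "\<And>x. x \<in> topspace X \<Longrightarrow> (\<lambda>n. a n x) \<longlonglongrightarrow> f x" "\<And>x. x \<notin> topspace X \<Longrightarrow> f x = 0"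
    using baire_oneE[OF assms(1)] by blast
  have c: "continuous_map euclideanreal euclideanreal \<phi>" using assms(2) by simp
  show ?thesis
  proof (rule baire_oneI[where g="\<lambda>n x. \<phi> (a n x)"])
    show "continuous_map X euclideanreal (\<lambda>x. \<phi> (a n x))" for n
      using continuous_map_compose[OF a(1) c] by (simp add: o_def)
    show "(\<lambda>n. \<phi> (a n x)) \<longlonglongrightarrow> \<phi> (f x)" if "x \<in> topspace X" for x
      by (rule isCont_tendsto_compose[OF _ a(2)[OF that]]) (use assms(2) continuous_on_eq_continuous_at in blast)
  qed (use a assms in auto)
qed

lemma baire_inv:
  assumes "f \<in> baire_one X" "\<And>x. x \<in> topspace X \<Longrightarrow> f x \<noteq> 0"
  shows "(\<lambda>x. 1 / f x) \<in> baire_one X"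
proof -
  obtain a where a: "\<And>n. continuous_map X euclideanreal (a n)"
    "\<And>x. x \<in> topspace X \<Longrightarrow> (\<lambda>n. a n x) \<longlonglongrightarrow> f x" "\<And>x. x \<notin> topspace X \<Longrightarrow> f x = 0"
    using baire_oneE[OF assms(1)] by blast
  show ?thesis
  proof (rule baire_oneI[where g="\<lambda>n x. a n x / ((a n x)^2 + 1 / (Suc n))"])
    show "continuous_map X euclideanreal (\<lambda>x. a n x / ((a n x)^2 + 1 / (Suc n)))" for n
      by (intro continuous_map_real_divide continuous_map_add continuous_map_real_pow a(1) continuous_map_const[THEN iffD2])
        (auto, smt (verit) zero_le_power2 divide_pos_pos of_nat_0_le_iff)
    show "(\<lambda>n. a n x / ((a n x)^2 + 1 / (Suc n))) \<longlonglongrightarrow> 1 / f x" if "x \<in> topspace X" for x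
    proof -
      have "(\<lambda>n. a n x / ((a n x)^2 + 1 / (Suc n))) \<longlonglongrightarrow> f x / ((f x)^2 + 0)"
        by (intro tendsto_intros a(2) that lim_1_over_n[THEN LIMSEQ_Suc] ) (use assms(2) that in simp)
      moreover have "f x / ((f x)^2 + 0) = 1 / f x" using assms(2)[OF that] by (simp add: power2_eq_square)
      ultimately show ?thesis by simp
    qed
  qed (use a in auto)
qed
lemma baire_series:
  assumes fs: "\<And>n. fs n \<in> baire_one X"
  shows "(\<lambda>x. \<Sum>n. (1/2)^n * min \<bar>fs n x\<bar> 1) \<in> baire_one X"
proof -
  have "\<forall>n. \<exists>a. (\<forall>k. continuous_map X euclideanreal (a k)) \<and>
    (\<forall>x\<in>topspace X. (\<lambda>k. a k x) \<longlonglongrightarrow> fs n x)"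
    using fs unfolding baire_one_def by blast
  then obtain ap where ap: "\<And>n k. continuous_map X euclideanreal (ap n k)"
    "\<And>n x. x \<in> topspace X \<Longrightarrow> (\<lambda>k. ap n k x) \<longlonglongrightarrow> fs n x"
    by metis
  have cc: "continuous_on UNIV (\<lambda>t::real. (1/2)^n * min \<bar>t\<bar> 1)" for n
    by (intro continuous_intros)
  show ?thesis
  proof (rule baire_oneI[where g="\<lambda>k x. \<Sum>n<k. (1/2)^n * min \<bar>ap n k x\<bar> 1"])
    show "continuous_map X euclideanreal (\<lambda>x. \<Sum>n<k. (1/2)^n * min \<bar>ap n k x\<bar> 1)" for k
    proof (rule continuous_map_sum)
      fix n
      have "continuous_map euclideanreal euclideanreal (\<lambda>t::real. (1/2)^n * min \<bar>t\<bar> 1)"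
        using cc by simp
      from continuous_map_compose[OF ap(1) this]
      show "continuous_map X euclideanreal (\<lambda>x. (1/2)^n * min \<bar>ap n k x\<bar> 1)"
        by (simp add: o_def)
    qed simp
    show "(\<lambda>k. \<Sum>n<k. (1/2)^n * min \<bar>ap n k x\<bar> 1) \<longlonglongrightarrow> (\<Sum>n. (1/2)^n * min \<bar>fs n x\<bar> 1)"
      if x: "x \<in> topspace X" for x
    proof -
      define a where "a n k = (if n < k then (1/2::real)^n * min \<bar>ap n k x\<bar> 1 else 0)" for n k
      have lim: "(\<lambda>k. a n k) \<longlonglongrightarrow> (1/2)^n * min \<bar>fs n x\<bar> 1" for n
      proof -
        have "(\<lambda>k. (1/2::real)^n * min \<bar>ap n k x\<bar> 1) \<longlonglongrightarrow> (1/2)^n * min \<bar>fs n x\<bar> 1"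
          by (rule isCont_tendsto_compose[OF _ ap(2)[OF x, of n]]) (use cc[of n] continuous_on_eq_continuous_at in blast)
        moreover have "eventually (\<lambda>k. (1/2::real)^n * min \<bar>ap n k x\<bar> 1 = a n k) sequentially"
          using eventually_gt_at_top[of n] by eventually_elim (simp add: a_def)
        ultimately show ?thesis by (rule Lim_transform_eventually)
      qed
      have bd: "eventually (\<lambda>(n,k). norm (a n k) \<le> (1/2)^n) (at_top \<times>\<^sub>F sequentially)"
        by (rule always_eventually) (auto simp: a_def abs_mult)
      have "((\<lambda>k. suminf (\<lambda>n. a n k)) \<longlonglongrightarrow> (\<Sum>n. (1/2)^n * min \<bar>fs n x\<bar> 1))"
        using tannerys_theorem[OF lim bd summable_geometric] by simp
      moreover have "suminf (\<lambda>n. a n k) = (\<Sum>n<k. (1/2)^n * min \<bar>ap n k x\<bar> 1)" for k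
        by (subst suminf_finite[of "{..<k}"]) (auto simp: a_def)
      ultimately show ?thesis by simp
    qed
    show "(\<Sum>n. (1/2)^n * min \<bar>fs n x\<bar> 1) = 0" if "x \<notin> topspace X" for x
      using fs that by (simp add: baire_one_def)
  qed
qed

context
  fixes X :: "'a topology" and M :: "('a \<Rightarrow> real) set"
  assumes max: "maximalideal M (B1_ring X)"
begin

lemma M_ideal: "ideal M (B1_ring X)" using max by (simp add: maximalideal_def)
lemma R_ring: "ring (B1_ring X)" using M_ideal by (simp add: ideal_def)
lemma R_cring: "cring (B1_ring X)"
  unfolding cring_def
proof (intro conjI comm_monoid.intro R_ring)
  show "monoid (B1_ring X)" using R_ring by (simp add: ring_def)
  show "comm_monoid_axioms (B1_ring X)" by (unfold_locales) (simp add: mult.commute)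
qed

lemma M_sub: "m \<in> M \<Longrightarrow> m \<in> baire_one X"
  using ideal.Icarr[OF M_ideal] by simp

lemma M_zero_out: "m \<in> M \<Longrightarrow> x \<notin> topspace X \<Longrightarrow> m x = 0"
  using M_sub by (simp add: baire_one_def)

lemma M_mult: "m \<in> M \<Longrightarrow> h \<in> baire_one X \<Longrightarrow> (\<lambda>x. h x * m x) \<in> M"
  using ideal.I_l_closed[OF M_ideal, of m h] by simp

lemma M_add: "m \<in> M \<Longrightarrow> n \<in> M \<Longrightarrow> (\<lambda>x. m x + n x) \<in> M"
  using additive_subgroup.a_closed[OF ideal.axioms(1)[OF M_ideal], of m n] by simp

lemma M_0: "(\<lambda>x. 0) \<in> M"
  using additive_subgroup.zero_closed[OF ideal.axioms(1)[OF M_ideal]] by simp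

lemma M_neg: "m \<in> M \<Longrightarrow> (\<lambda>x. - m x) \<in> M"
proof -
  assume m: "m \<in> M"
  have "(\<lambda>x. const_fun X (-1) x * m x) \<in> M" by (rule M_mult[OF m baire_const])
  moreover have "(\<lambda>x. const_fun X (-1) x * m x) = (\<lambda>x. - m x)"
    using M_zero_out[OF m] by (auto simp: const_fun_def)
  ultimately show ?thesis by simp
qed

lemma M_diff: "m \<in> M \<Longrightarrow> n \<in> M \<Longrightarrow> (\<lambda>x. m x - n x) \<in> M"
  using M_add[OF _ M_neg, of m n] by simp

lemma unit_lemma: "m \<in> M \<Longrightarrow> \<exists>x\<in>topspace X. m x = 0"
proof (rule ccontr)
  assume m: "m \<in> M" and "\<not> (\<exists>x\<in>topspace X. m x = 0)"
  hence nz: "\<And>x. x \<in> topspace X \<Longrightarrow> m x \<noteq> 0" by auto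
  have "(\<lambda>x. 1 / m x) \<in> baire_one X" by (rule baire_inv[OF M_sub[OF m] nz])
  from M_mult[OF m this] have "(\<lambda>x. 1 / m x * m x) \<in> M" .
  moreover have "(\<lambda>x. 1 / m x * m x) = const_fun X 1"
    using nz M_zero_out[OF m] by (auto simp: const_fun_def)
  ultimately have "\<one>\<^bsub>B1_ring X\<^esub> \<in> M" by simp
  hence "M = carrier (B1_ring X)" by (rule ideal.one_imp_carrier[OF M_ideal])
  with maximalideal.I_notcarr[OF max] show False by simp
qed

lemma lemmaZ:
  assumes f: "f \<in> baire_one X" and fM: "f \<notin> M"
  shows "\<exists>m\<in>M. \<exists>h\<in>baire_one X. \<forall>x\<in>topspace X. m x + h x * f x = 1"
proof -
  interpret cring "B1_ring X" by (rule R_cring)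
  define J where "J = M <+>\<^bsub>B1_ring X\<^esub> PIdl\<^bsub>B1_ring X\<^esub> f"
  have fc: "f \<in> carrier (B1_ring X)" using f by simp
  have J: "ideal J (B1_ring X)" unfolding J_def
    by (rule add_ideals[OF M_ideal cgenideal_ideal[OF fc]])
  have zP: "(\<lambda>x. 0) \<in> PIdl\<^bsub>B1_ring X\<^esub> f"
    unfolding cgenideal_def by (auto intro!: exI[of _ "\<lambda>x. 0"] simp: baire_one_def)
        (rule exI[of _ "\<lambda>n x. 0"], simp)
  have "M \<subseteq> J"
  proof
    fix m assume "m \<in> M"
    thus "m \<in> J" unfolding J_def set_add_def' using zP by force
  qed
  moreover have "f \<in> J" unfolding J_def set_add_def'
    using M_0 cgenideal_self[OF fc] by force
  moreover have "J \<subseteq> carrier (B1_ring X)" using ideal.Icarr[OF J] by blast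
  ultimately have "J = carrier (B1_ring X)"
    using maximalideal.I_maximal[OF max J] fM by blast
  hence "const_fun X 1 \<in> J" using baire_const by simp
  then obtain m p where m: "m \<in> M" and p: "p \<in> PIdl\<^bsub>B1_ring X\<^esub> f"
    and e: "const_fun X 1 = (\<lambda>x. m x + p x)"
    unfolding J_def set_add_def' by auto
  from p obtain h where h: "h \<in> baire_one X" and ph: "p = (\<lambda>x. h x * f x)"
    unfolding cgenideal_def by auto
  show ?thesis
  proof (intro bexI[OF _ m] bexI[OF _ h] ballI)
    fix x assume "x \<in> topspace X"
    thus "m x + h x * f x = 1" using fun_cong[OF e, of x] ph by (simp add: const_fun_def)
  qed
qed

lemma lemmaZ':
  assumes g: "g \<in> M" and f: "f \<in> baire_one X"
    and sub: "zero_set X g \<subseteq> zero_set X f"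
  shows "f \<in> M"
proof (rule ccontr)
  assume "f \<notin> M"
  then obtain m h where m: "m \<in> M" and h: "h \<in> baire_one X"
    and e: "\<And>x. x \<in> topspace X \<Longrightarrow> m x + h x * f x = 1"
    using lemmaZ[OF f] by blast
  have "(\<lambda>x. m x * m x + g x * g x) \<in> M"
    by (intro M_add M_mult m g M_sub)
  then obtain x where x: "x \<in> topspace X" "m x * m x + g x * g x = 0"
    using unit_lemma by blast
  hence "m x = 0" "g x = 0" by (auto simp: add_nonneg_eq_0_iff)
  hence "f x = 0" using sub x(1) by (auto simp: zero_set_def)
  with e[OF x(1)] \<open>m x = 0\<close> show False by simp
qed

lemma prime_lemma:
  assumes a: "a \<in> baire_one X" and b: "b \<in> baire_one X"
    and ab: "(\<lambda>x. a x * b x) \<in> M"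
  shows "a \<in> M \<or> b \<in> M"
proof (cases "a \<in> M")
  case False
  then obtain m h where m: "m \<in> M" and h: "h \<in> baire_one X"
    and e: "\<And>x. x \<in> topspace X \<Longrightarrow> m x + h x * a x = 1"
    using lemmaZ[OF a] by blast
  have "(\<lambda>x. b x * m x + h x * (a x * b x)) \<in> M"
    by (intro M_add M_mult m b h ab)
  moreover have "(\<lambda>x. b x * m x + h x * (a x * b x)) = b"
  proof
    fix x show "b x * m x + h x * (a x * b x) = b x"
    proof (cases "x \<in> topspace X")
      case True
      have "b x * m x + h x * (a x * b x) = b x * (m x + h x * a x)" by (simp add: algebra_simps)
      thus ?thesis using e[OF True] by simp
    next
      case False thus ?thesis using b by (simp add: baire_one_def)
    qed
  qed
  ultimately show ?thesis by simp
qed simp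



lemma real_iff:
  "real_max_ideal X M \<longleftrightarrow> (\<forall>f\<in>baire_one X. \<exists>r. (\<lambda>x. f x - const_fun X r x) \<in> M)"
proof -
  interpret ring "B1_ring X" by (rule R_ring)
  have minus: "a \<ominus>\<^bsub>B1_ring X\<^esub> b = (\<lambda>x. a x - b x)"
    if "a \<in> baire_one X" "b \<in> baire_one X" for a b
  proof -
    have nb: "(\<lambda>x. - b x) \<in> baire_one X"
      using baire_comp[OF that(2), of uminus] by (simp add: continuous_on_minus continuous_on_id)
    have "\<ominus>\<^bsub>B1_ring X\<^esub> b = (\<lambda>x. - b x)"
      by (rule minus_equality) (use that nb in auto)
    thus ?thesis by (simp add: a_minus_def)
  qed
  have eq: "M +>\<^bsub>B1_ring X\<^esub> f = M +>\<^bsub>B1_ring X\<^esub> const_fun X r \<longleftrightarrow>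
      (\<lambda>x. f x - const_fun X r x) \<in> M" if "f \<in> baire_one X" for f r
    using quotient_eq_iff_same_a_r_cos[OF M_ideal, of f "const_fun X r"] that baire_const[of X r] minus[OF that baire_const[of X r]]
    by simp
  have car: "carrier (B1_ring X Quot M) = {M +>\<^bsub>B1_ring X\<^esub> f | f. f \<in> baire_one X}"
    by (auto simp: FactRing_def A_RCOSETS_def')
  show ?thesis
  proof
    assume R: "real_max_ideal X M"
    show "\<forall>f\<in>baire_one X. \<exists>r. (\<lambda>x. f x - const_fun X r x) \<in> M"
    proof
      fix f assume f: "f \<in> baire_one X"
      hence "M +>\<^bsub>B1_ring X\<^esub> f \<in> carrier (B1_ring X Quot M)" unfolding car by blast
      with R obtain r where "M +>\<^bsub>B1_ring X\<^esub> f = M +>\<^bsub>B1_ring X\<^esub> const_fun X r"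
        unfolding real_max_ideal_def by blast
      thus "\<exists>r. (\<lambda>x. f x - const_fun X r x) \<in> M" using eq[OF f] by blast
    qed
  next
    assume H: "\<forall>f\<in>baire_one X. \<exists>r. (\<lambda>x. f x - const_fun X r x) \<in> M"
    show "real_max_ideal X M" unfolding real_max_ideal_def
    proof
      fix C assume "C \<in> carrier (B1_ring X Quot M)"
      then obtain f where f: "f \<in> baire_one X" and C: "C = M +>\<^bsub>B1_ring X\<^esub> f"
        unfolding car by blast
      obtain r where "(\<lambda>x. f x - const_fun X r x) \<in> M" using H f by blast
      hence "C = M +>\<^bsub>B1_ring X\<^esub> const_fun X r" using eq[OF f] C by blast
      thus "C \<in> range (\<lambda>r. M +>\<^bsub>B1_ring X\<^esub> const_fun X r)" by blast
    qed
  qed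
qed

lemma M_sum: fixes N :: nat and fs :: "nat \<Rightarrow> 'a \<Rightarrow> real" shows "(\<And>n. n < N \<Longrightarrow> fs n \<in> M) \<Longrightarrow> (\<lambda>x. \<Sum>n<N. fs n x * fs n x) \<in> M"
proof (induction N)
  case 0 thus ?case using M_0 by simp
next
  case (Suc N)
  have "(\<lambda>x. (\<Sum>n<N. fs n x * fs n x) + fs N x * fs N x) \<in> M"
    using Suc by (intro M_add M_mult M_sub) auto
  thus ?case by simp
qed

lemma dir12:
  assumes R: "real_max_ideal X M" and F: "F \<subseteq> zero_set X ` M" "countable F" "F \<noteq> {}"
  shows "\<Inter>F \<in> zero_set X ` M"
proof -
  have "\<forall>n. \<exists>m\<in>M. zero_set X m = from_nat_into F n"
    using from_nat_into[OF F(3)] F(1) by blast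
  then obtain fs where fsM: "\<And>n. fs n \<in> M" and fsZ: "\<And>n. zero_set X (fs n) = from_nat_into F n"
    by metis
  have FI: "\<Inter>F = (\<Inter>n. zero_set X (fs n))"
    using range_from_nat_into[OF F(3) F(2)] fsZ by auto
  define t where "t x n = (1/2::real)^n * min \<bar>fs n x\<bar> 1" for x n
  define g where "g x = (\<Sum>n. t x n)" for x
  have t0: "0 \<le> t x n" for x n by (simp add: t_def)
  have tb: "t x n \<le> (1/2)^n" for x n by (simp add: t_def)
  have ts: "summable (t x)" for x
    by (rule summable_comparison_test[OF _ summable_geometric[of "1/2::real"]]) (use t0 tb in auto)
  have gB: "g \<in> baire_one X"
    unfolding g_def t_def by (rule baire_series[OF M_sub[OF fsM]])
  have gZ: "zero_set X g = (\<Inter>n. zero_set X (fs n))"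
  proof -
    have "g x = 0 \<longleftrightarrow> (\<forall>n. fs n x = 0)" for x
    proof -
      have "t x n = 0 \<longleftrightarrow> fs n x = 0" for n by (auto simp: t_def min_def split: if_splits)
      thus ?thesis unfolding g_def using suminf_eq_zero_iff[OF ts t0] by simp
    qed
    thus ?thesis by (auto simp: zero_set_def)
  qed
  obtain r where r: "(\<lambda>x. g x - const_fun X r x) \<in> M"
    using R gB real_iff by blast
  have bound: "0 \<le> r \<and> r \<le> 2 * (1/2)^N" for N
  proof -
    have "(\<lambda>x. (\<Sum>n<N. fs n x * fs n x) + (g x - const_fun X r x) * (g x - const_fun X r x)) \<in> M"
      by (intro M_add M_mult M_sum fsM r M_sub)
    then obtain x where x: "x \<in> topspace X"
      "(\<Sum>n<N. fs n x * fs n x) + (g x - const_fun X r x) * (g x - const_fun X r x) = 0"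
      using unit_lemma by blast
    have nn: "0 \<le> (\<Sum>n<N. fs n x * fs n x)" by (intro sum_nonneg) simp
    have sq0: "(g x - const_fun X r x) * (g x - const_fun X r x) = 0"
      using x(2) nn by (smt (verit) zero_le_square)
    hence gr: "g x = r" using x(1) by (simp add: const_fun_def)
    have "(\<Sum>n<N. fs n x * fs n x) = 0" using x(2) sq0 by simp
    hence fz: "fs n x = 0" if "n < N" for n
      using sum_nonneg_eq_0_iff[of "{..<N}" "\<lambda>n. fs n x * fs n x"] that by simp
    have "g x = (\<Sum>n. t x (n + N)) + (\<Sum>n<N. t x n)"
      unfolding g_def by (rule suminf_split_initial_segment[OF ts])
    also have "(\<Sum>n<N. t x n) = 0" using fz by (simp add: t_def)
    finally have gx: "g x = (\<Sum>n. t x (n + N))" by simp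
    have "(\<Sum>n. t x (n + N)) \<le> (\<Sum>n. (1/2::real)^(n+N))"
      by (rule suminf_le) (use tb summable_ignore_initial_segment[OF ts] 
          summable_ignore_initial_segment[OF summable_geometric[of "1/2::real"]] in auto)
    also have "(\<Sum>n. (1/2::real)^(n+N)) = (1/2)^N * 2"
      by (simp add: power_add suminf_mult2[symmetric, OF summable_geometric] suminf_geometric mult.commute)
    finally have "g x \<le> 2 * (1/2)^N" using gx by simp
    moreover have "0 \<le> g x" unfolding g_def by (rule suminf_nonneg[OF ts t0])
    ultimately show ?thesis using gr by simp
  qed
  have "r = 0"
  proof (rule ccontr)
    assume "r \<noteq> 0"
    hence "r > 0" using bound[of 0] by simp
    then obtain N where "(1/2::real)^N < r/2" using real_arch_pow_inv[of "r/2" "1/2"] by auto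
    with bound[of N] show False by simp
  qed
  hence "g \<in> M" using r by (simp add: const_fun_def)
  thus ?thesis using FI gZ by (metis image_eqI)
qed

lemma dir23:
  assumes "\<Inter>F \<in> zero_set X ` M"
  shows "\<Inter>F \<noteq> {}"
proof -
  obtain m where "m \<in> M" "\<Inter>F = zero_set X m" using assms by blast
  with unit_lemma show ?thesis by (auto simp: zero_set_def)
qed

lemma dir31:
  assumes H: "\<forall>F. F \<subseteq> zero_set X ` M \<and> countable F \<and> F \<noteq> {} \<longrightarrow> \<Inter>F \<noteq> {}"
  shows "real_max_ideal X M"
proof (rule ccontr)
  assume "\<not> real_max_ideal X M"
  then obtain f where f: "f \<in> baire_one X" and nf: "\<And>r. (\<lambda>x. f x - const_fun X r x) \<notin> M"
    using real_iff by blast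
  define d where "d r = (\<lambda>x. f x - const_fun X r x)" for r
  define ng where "ng r = (\<lambda>x. min (d r x) 0)" for r
  define ps where "ps r = (\<lambda>x. max (d r x) 0)" for r
  have dB: "d r \<in> baire_one X" for r
    unfolding d_def using M_diff baire_add[OF f baire_comp[OF baire_const[of X r], of uminus]]
    by (simp add: continuous_on_minus continuous_on_id)
  have ngB: "ng r \<in> baire_one X" for r
    unfolding ng_def by (rule baire_comp[OF dB]) (auto intro: continuous_intros)
  have psB: "ps r \<in> baire_one X" for r
    unfolding ps_def by (rule baire_comp[OF dB]) (auto intro: continuous_intros)
  have ngZ: "zero_set X (ng r) = {x\<in>topspace X. r \<le> f x}" for r
    by (auto simp: zero_set_def ng_def d_def const_fun_def min_def)
  have psZ: "zero_set X (ps r) = {x\<in>topspace X. f x \<le> r}" for r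
    by (auto simp: zero_set_def ps_def d_def const_fun_def max_def)
  have one: "ng r \<in> M \<or> ps r \<in> M" for r
  proof (rule prime_lemma[OF ngB psB])
    have "(\<lambda>x. ng r x * ps r x) = (\<lambda>x. 0)"
      by (auto simp: ng_def ps_def min_def max_def)
    thus "(\<lambda>x. ng r x * ps r x) \<in> M" using M_0 by simp
  qed
  have notboth: "\<not> (ng r \<in> M \<and> ps r \<in> M)" for r
  proof
    assume "ng r \<in> M \<and> ps r \<in> M"
    hence "(\<lambda>x. ng r x + ps r x) \<in> M" using M_add by blast
    moreover have "(\<lambda>x. ng r x + ps r x) = d r"
      by (auto simp: ng_def ps_def min_def max_def)
    ultimately show False using nf by (simp add: d_def)
  qed
  define A where "A = {r. ng r \<in> M}"
  have Adown: "s \<in> A" if "r \<in> A" "s \<le> r" for r s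
  proof -
    have "zero_set X (ng r) \<subseteq> zero_set X (ng s)" using that(2) unfolding ngZ by auto
    thus ?thesis using lemmaZ'[of "ng r" "ng s"] that(1) ngB by (auto simp: A_def)
  qed
  have psM: "ps r \<in> M" if "r \<notin> A" for r using one that by (auto simp: A_def)
  define c where "c = (if A \<noteq> {} \<and> bdd_above A then Sup A else 0)"
  obtain m h where m: "m \<in> M" and e: "\<And>x. x \<in> topspace X \<Longrightarrow> m x + h x * d c x = 1"
    using lemmaZ[OF dB nf[of c, folded d_def]] by blast
  define S where "S q = (if q \<in> A then zero_set X (ng q) else zero_set X (ps q))" for q
  define F where "F = insert (zero_set X m) (S ` \<rat>)"
  have "F \<subseteq> zero_set X ` M" unfolding F_def S_def using m psM by (auto simp: A_def)
  moreover have "countable F" unfolding F_def using countable_image[OF countable_rat] by simp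
  moreover have "F \<noteq> {}" unfolding F_def by simp
  ultimately have ne: "\<Inter>F \<noteq> {}" using H by blast
  then obtain x where x: "x \<in> \<Inter>F" by blast
  hence xm: "x \<in> zero_set X m" unfolding F_def by simp
  hence xt: "x \<in> topspace X" and "m x = 0" by (auto simp: zero_set_def)
  with e[OF xt] have "d c x \<noteq> 0" by auto
  hence fc: "f x \<noteq> c" using xt by (simp add: d_def const_fun_def)
  have xS: "x \<in> S q" if "q \<in> \<rat>" for q using x that unfolding F_def by auto
  show False
  proof (cases "f x \<in> A")
    case True
    have nq: "\<not> (\<exists>q\<in>\<rat>. f x < q \<and> q \<in> A)"
    proof
      assume "\<exists>q\<in>\<rat>. f x < q \<and> q \<in> A"
      then obtain q where "q \<in> \<rat>" "f x < q" "q \<in> A" by blast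
      with xS[of q] show False by (simp add: S_def ngZ)
    qed
    hence Aub: "a \<le> f x" if "a \<in> A" for a
    proof -
      { assume "f x < a"
        then obtain q where "q \<in> \<rat>" "f x < q" "q < a" using Rats_dense_in_real by blast
        hence False using Adown[OF that, of q] nq by auto }
      thus ?thesis by force
    qed
    have "A \<noteq> {}" "bdd_above A" using True Aub by (auto simp: bdd_above_def)
    hence "c = Sup A" by (simp add: c_def)
    also have "Sup A = f x" by (rule cSup_eq_maximum[OF True Aub])
    finally show False using fc by simp
  next
    case False
    have nq: "\<not> (\<exists>q\<in>\<rat>. q < f x \<and> q \<notin> A)"
    proof
      assume "\<exists>q\<in>\<rat>. q < f x \<and> q \<notin> A"
      then obtain q where "q \<in> \<rat>" "q < f x" "q \<notin> A" by blast
      with xS[of q] show False by (simp add: S_def psZ)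
    qed
    hence AA: "A = {..<f x}"
    proof -
      have "a \<in> A" if lt: "a < f x" for a
      proof -
        obtain q where "q \<in> \<rat>" "a < q" "q < f x" using Rats_dense_in_real[OF lt] by blast
        thus ?thesis using Adown[of q a] nq by auto
      qed
      moreover have "a < f x" if "a \<in> A" for a
        using Adown[OF that, of "f x"] False by (cases "a < f x") auto
      ultimately show ?thesis by auto
    qed
    have "A \<noteq> {}" using AA by (auto intro: exI[of _ "f x - 1"])
    moreover have "bdd_above A" using AA by simp
    ultimately have "c = Sup A" by (simp add: c_def)
    also have "Sup A = f x" using AA by simp
    finally show False using fc by simp
  qed
qed
end

theorem theorem4p26:
  fixes X :: "'a topology" and M :: "('a \<Rightarrow> real) set"
  assumes "maximalideal M (B1_ring X)"
  shows "(real_max_ideal X M \<longleftrightarrow>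
            (\<forall>F. F \<subseteq> zero_set X ` M \<and> countable F \<and> F \<noteq> {} \<longrightarrow> \<Inter>F \<in> zero_set X ` M))
       \<and> (real_max_ideal X M \<longleftrightarrow>
            (\<forall>F. F \<subseteq> zero_set X ` M \<and> countable F \<and> F \<noteq> {} \<longrightarrow> \<Inter>F \<noteq> {}))"
proof -
  have 12: "real_max_ideal X M \<Longrightarrow> (\<forall>F. F \<subseteq> zero_set X ` M \<and> countable F \<and> F \<noteq> {} \<longrightarrow> \<Inter>F \<in> zero_set X ` M)"
    using dir12[OF assms] by blast
  have 23: "(\<forall>F. F \<subseteq> zero_set X ` M \<and> countable F \<and> F \<noteq> {} \<longrightarrow> \<Inter>F \<in> zero_set X ` M) \<Longrightarrow>
     (\<forall>F. F \<subseteq> zero_set X ` M \<and> countable F \<and> F \<noteq> {} \<longrightarrow> \<Inter>F \<noteq> {})"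
    using dir23[OF assms] by blast
  have 31: "(\<forall>F. F \<subseteq> zero_set X ` M \<and> countable F \<and> F \<noteq> {} \<longrightarrow> \<Inter>F \<noteq> {}) \<Longrightarrow> real_max_ideal X M"
    using dir31[OF assms] by blast
  show ?thesis using 12 23 31 by blast
qed

end
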